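(* Let $I$ be (the matrix of) a te-interlace and let $p$ be a pivot of $I$. Then every nonzero entry of $I/\!\!/p$ has absolute value $2$, and in the $\{0,\pm1\}$-matrix $\tfrac12(I/\!\!/p)$ no two rows form a te-lace. In particular, the rows of $\tfrac12(I/\!\!/p)$ contain no te-interlace.
   Context: A set of vectors is identified with the matrix whose rows are these vectors. A matrix is totally equimodular if every set of linearly independent rows forms a matrix of full row rank whose nonzero maximal minors all have the same absolute value, and totally unimodular if all its square submatrices have determinant in $\{0,\pm1\}$. A linearly independent set of $\{0,\pm1\}$-vectors is a te-set if its matrix is totally equimodular, a tu-set if its matrix is totally unimodular, a te-lace if it is a te-set, not a tu-set, and all its proper subsets are tu-sets, and a te-interlace if it is a te-set, not a tu-set, and every pair of its vectors is a te-lace. A pivot is a position $p=(i,j)$ with nonzero entry; $I/p$ is obtained by dividing row $i$ by that entry and adding multiples of it to the other rows so that column $j$ becomes the $i$-th unit vector; the trim $I/\!\!/p$ is obtained from $I/p$ by deleting row $i$ and column $j$. *)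

theory Defs
  imports "Jordan_Normal_Form.Determinant" "Jordan_Normal_Form.DL_Submatrix"
begin

text \<open>Matrices are real matrices of the JNF type 'a mat. A set of vectors is identified
with the matrix whose rows are these vectors.\<close>

definition zero_pm1 :: "real mat \<Rightarrow> bool" where
  "zero_pm1 A \<longleftrightarrow> (\<forall>i<dim_row A. \<forall>j<dim_col A. A $$ (i,j) \<in> {-1, 0, 1})"

definition rows_lin_indep :: "real mat \<Rightarrow> bool" where
  "rows_lin_indep A \<longleftrightarrow>
     (\<forall>c :: nat \<Rightarrow> real. (\<forall>j<dim_col A. (\<Sum>i<dim_row A. c i * A $$ (i,j)) = 0)
        \<longrightarrow> (\<forall>i<dim_row A. c i = 0))"

definition full_row_rank :: "real mat \<Rightarrow> bool" where
  "full_row_rank A \<longleftrightarrow> rows_lin_indep A"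

definition row_sub :: "real mat \<Rightarrow> nat set \<Rightarrow> real mat" where
  "row_sub A S = submatrix A S UNIV"

definition tot_unimod :: "real mat \<Rightarrow> bool" where
  "tot_unimod A \<longleftrightarrow>
     (\<forall>R C. R \<subseteq> {..<dim_row A} \<longrightarrow> C \<subseteq> {..<dim_col A} \<longrightarrow> card R = card C \<longrightarrow>
        det (submatrix A R C) \<in> {-1, 0, 1})"

definition tot_equimod :: "real mat \<Rightarrow> bool" where
  "tot_equimod A \<longleftrightarrow>
     (\<forall>S. S \<subseteq> {..<dim_row A} \<longrightarrow> rows_lin_indep (row_sub A S) \<longrightarrow>
        full_row_rank (row_sub A S) \<and>
        (\<forall>C1 C2. C1 \<subseteq> {..<dim_col A} \<longrightarrow> C2 \<subseteq> {..<dim_col A} \<longrightarrow>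
           card C1 = card S \<longrightarrow> card C2 = card S \<longrightarrow>
           det (submatrix A S C1) \<noteq> 0 \<longrightarrow> det (submatrix A S C2) \<noteq> 0 \<longrightarrow>
           \<bar>det (submatrix A S C1)\<bar> = \<bar>det (submatrix A S C2)\<bar>))"

definition te_set :: "real mat \<Rightarrow> bool" where
  "te_set A \<longleftrightarrow> zero_pm1 A \<and> rows_lin_indep A \<and> tot_equimod A"

definition tu_set :: "real mat \<Rightarrow> bool" where
  "tu_set A \<longleftrightarrow> zero_pm1 A \<and> rows_lin_indep A \<and> tot_unimod A"

definition te_lace :: "real mat \<Rightarrow> bool" where
  "te_lace A \<longleftrightarrow> te_set A \<and> \<not> tu_set A \<and>
     (\<forall>S. S \<subset> {..<dim_row A} \<longrightarrow> tu_set (row_sub A S))"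

definition te_interlace :: "real mat \<Rightarrow> bool" where
  "te_interlace A \<longleftrightarrow> te_set A \<and> \<not> tu_set A \<and>
     (\<forall>i1 i2. i1 < dim_row A \<longrightarrow> i2 < dim_row A \<longrightarrow> i1 \<noteq> i2 \<longrightarrow>
        te_lace (row_sub A {i1, i2}))"

definition pivot_op :: "real mat \<Rightarrow> nat \<Rightarrow> nat \<Rightarrow> real mat" where
  "pivot_op A i j = mat (dim_row A) (dim_col A) (\<lambda>(r,c).
      if r = i then A $$ (i,c) / A $$ (i,j)
      else A $$ (r,c) - (A $$ (r,j) / A $$ (i,j)) * A $$ (i,c))"

definition trim :: "real mat \<Rightarrow> nat \<Rightarrow> nat \<Rightarrow> real mat" where
  "trim A i j = submatrix (pivot_op A i j) (- {i}) (- {j})"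

end

theory Submission imports Defs begin
lemma det2: assumes "A \<in> carrier_mat 2 2"
  shows "det A = A $$ (0,0) * A $$ (1,1) - A $$ (0,1) * A $$ (1,0)"
proof -
  have "det A = (\<Sum>j<2. A $$ (0,j) * cofactor A 0 j)"
    by (rule laplace_expansion_row[OF assms], simp)
  also have "\<dots> = A $$ (0,0) * cofactor A 0 0 + A $$ (0,1) * cofactor A 0 1"
    by (simp add: numeral_2_eq_2)
  also have "cofactor A 0 0 = A $$ (1,1)"
    unfolding cofactor_def using assms
    by (subst det_single, auto simp: mat_delete_def)
  also have "cofactor A 0 1 = - A $$ (1,0)"
    unfolding cofactor_def using assms
    by (subst det_single, auto simp: mat_delete_def)
  finally show ?thesis by simp
qed

lemma pick2: assumes "(a::nat) < b" shows "pick {a,b} 0 = a" "pick {a,b} 1 = b"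
proof -
  show 0: "pick {a,b} 0 = a" using assms by (auto intro!: Least_equality)
  have "pick {a,b} (Suc 0) = (LEAST x. x \<in> {a,b} \<and> x > pick {a,b} 0)" by simp
  also have "\<dots> = b" unfolding 0 using assms by (auto intro!: Least_equality)
  finally show "pick {a,b} 1 = b" by simp
qed

definition mm :: "real mat \<Rightarrow> nat \<Rightarrow> nat \<Rightarrow> nat \<Rightarrow> nat \<Rightarrow> real" where
  "mm B a b c d = B $$ (a,c) * B $$ (b,d) - B $$ (a,d) * B $$ (b,c)"

lemma card_sub_eq: "S \<subseteq> {..<n} \<Longrightarrow> card {i. i < n \<and> i \<in> S} = card S"
  by (metis (no_types, lifting) Collect_cong Int_absorb1 Int_def lessThan_def mem_Collect_eq)

lemma pick_lt: "r < card {a. a < n \<and> a \<in> S} \<Longrightarrow> pick S r < n"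
  by (rule pick_le)

lemma det_sub:
  fixes B :: "real mat"
  assumes R: "R \<subseteq> {..<dim_row B}" and C: "C \<subseteq> {..<dim_col B}" and k: "card R = card C"
  shows "card R = 0 \<Longrightarrow> det (submatrix B R C) = 1"
    and "card R = 1 \<Longrightarrow> det (submatrix B R C) = B $$ (pick R 0, pick C 0)"
    and "card R = 2 \<Longrightarrow> det (submatrix B R C) = mm B (pick R 0) (pick R 1) (pick C 0) (pick C 1)"
proof -
  have cr: "card {i. i < dim_row B \<and> i \<in> R} = card R" by (rule card_sub_eq[OF R])
  have cc: "card {i. i < dim_col B \<and> i \<in> C} = card R" using card_sub_eq[OF C] k by argo
  have dr: "dim_row (submatrix B R C) = card R" using cr by (simp only: dim_submatrix)
  have dc: "dim_col (submatrix B R C) = card R" using cc by (simp only: dim_submatrix)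
  have idx: "submatrix B R C $$ (x,y) = B $$ (pick R x, pick C y)" if "x < card R" "y < card R" for x y
    using that cr cc by (intro submatrix_index) simp_all
  have car: "submatrix B R C \<in> carrier_mat (card R) (card R)" by (rule carrier_matI[OF dr dc])
  show "card R = 0 \<Longrightarrow> det (submatrix B R C) = 1"
    using car by simp
  show "card R = 1 \<Longrightarrow> det (submatrix B R C) = B $$ (pick R 0, pick C 0)"
  proof -
    assume 1: "card R = 1"
    have "det (submatrix B R C) = submatrix B R C $$ (0,0)" using car 1 by (intro det_single) simp
    also have "\<dots> = B $$ (pick R 0, pick C 0)" using idx[of 0 0] 1 by simp
    finally show ?thesis .
  qed
  show "card R = 2 \<Longrightarrow> det (submatrix B R C) = mm B (pick R 0) (pick R 1) (pick C 0) (pick C 1)"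
  proof -
    assume 2: "card R = 2"
    have "det (submatrix B R C) = submatrix B R C $$ (0,0) * submatrix B R C $$ (1,1)
       - submatrix B R C $$ (0,1) * submatrix B R C $$ (1,0)" using car 2 by (intro det2) simp
    also have "\<dots> = mm B (pick R 0) (pick R 1) (pick C 0) (pick C 1)"
      unfolding mm_def using idx[of 0 0] idx[of 0 1] idx[of 1 0] idx[of 1 1] 2 by simp
    finally show ?thesis .
  qed
qed

lemma pm1_mult: "(x::real) \<in> {-1,0,1} \<Longrightarrow> y \<in> {-1,0,1} \<Longrightarrow> x*y \<in> {-1,0,1}" by auto

lemma mm_range: "(x::real) \<in> {-1,0,1} \<Longrightarrow> y \<in> {-1,0,1} \<Longrightarrow> z \<in> {-1,0,1} \<Longrightarrow> w \<in> {-1,0,1}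
   \<Longrightarrow> x*y - z*w \<notin> {-1,0,1} \<Longrightarrow> \<bar>x*y - z*w\<bar> = 2"
  by (elim insertE; simp)

definition goodH :: "real mat \<Rightarrow> bool" where
  "goodH B \<longleftrightarrow> zero_pm1 B \<and> (\<forall>a b c d. a < dim_row B \<longrightarrow> b < dim_row B \<longrightarrow> c < dim_col B
      \<longrightarrow> d < dim_col B \<longrightarrow> mm B a b c d \<in> {-1,0,1})"

lemma goodH_tu: assumes "goodH B" "dim_row B \<le> 2" shows "tot_unimod B"
  unfolding tot_unimod_def
proof (intro allI impI)
  fix R C assume R: "R \<subseteq> {..<dim_row B}" and C: "C \<subseteq> {..<dim_col B}" and k: "card R = card C"
  have zp: "zero_pm1 B" using assms(1) goodH_def by blast
  have cR: "card R \<le> 2" using card_mono[OF _ R] assms(2) by simp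
  have cr: "card {a. a < dim_row B \<and> a \<in> R} = card R" using card_sub_eq[OF R] .
  have cc: "card {a. a < dim_col B \<and> a \<in> C} = card R" using card_sub_eq[OF C] k by simp
  have pr: "x < card R \<Longrightarrow> pick R x < dim_row B" for x using pick_lt[of x "dim_row B" R] cr by simp
  have pc: "x < card R \<Longrightarrow> pick C x < dim_col B" for x using pick_lt[of x "dim_col B" C] cc by simp
  consider "card R = 0" | "card R = 1" | "card R = 2" using cR by linarith
  then show "det (submatrix B R C) \<in> {-1,0,1}"
  proof cases
    case 1 then show ?thesis using det_sub(1)[OF R C k] by simp
  next
    case 2 then show ?thesis using det_sub(2)[OF R C k] pr[of 0] pc[of 0] zp
      unfolding zero_pm1_def by simp
  next
    case 3 then show ?thesis using det_sub(3)[OF R C k] pr[of 0] pc[of 0] pr[of 1] pc[of 1] assms(1)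
      unfolding goodH_def by simp
  qed
qed

lemma goodH_not_te: assumes "goodH B" "dim_row B \<le> 2" shows "\<not> (te_set B \<and> \<not> tu_set B)"
  using goodH_tu[OF assms] unfolding te_set_def tu_set_def by blast

lemma rs_dim: "dim_row (row_sub A S) = card {i. i < dim_row A \<and> i \<in> S}" "dim_col (row_sub A S) = dim_col A"
  unfolding row_sub_def by (simp_all add: dim_submatrix)

lemma rs_idx: assumes "r < dim_row (row_sub A S)" "c < dim_col A"
  shows "row_sub A S $$ (r,c) = A $$ (pick S r, c)" "pick S r < dim_row A"
proof -
  have r: "r < card {i. i < dim_row A \<and> i \<in> S}" using assms(1) rs_dim(1) by simp
  have c: "c < card {j. j < dim_col A \<and> j \<in> UNIV}" using assms(2) by simp
  show "row_sub A S $$ (r,c) = A $$ (pick S r, c)"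
    unfolding row_sub_def using submatrix_index[OF r c] by (simp add: pick_UNIV)
  show "pick S r < dim_row A" using pick_le[OF r] .
qed

lemma rs_dim_le: "finite S \<Longrightarrow> dim_row (row_sub A S) \<le> card S"
  unfolding rs_dim by (rule card_mono) auto

lemma goodH_rs: assumes "goodH B" shows "goodH (row_sub B S)"
  unfolding goodH_def
proof (intro conjI allI impI)
  have z: "zero_pm1 B" and m: "\<And>a b c d. a < dim_row B \<Longrightarrow> b < dim_row B \<Longrightarrow> c < dim_col B
      \<Longrightarrow> d < dim_col B \<Longrightarrow> mm B a b c d \<in> {-1,0,1}" using assms unfolding goodH_def by blast+
  show "zero_pm1 (row_sub B S)" unfolding zero_pm1_def
  proof (intro allI impI)
    fix r c assume "r < dim_row (row_sub B S)" "c < dim_col (row_sub B S)"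
    then show "row_sub B S $$ (r, c) \<in> {- 1, 0, 1}" using rs_idx[of r B S c] z unfolding zero_pm1_def rs_dim(2)
      by simp
  qed
  fix a b c d assume "a < dim_row (row_sub B S)" "b < dim_row (row_sub B S)" "c < dim_col (row_sub B S)"
      "d < dim_col (row_sub B S)"
  then show "mm (row_sub B S) a b c d \<in> {-1,0,1}"
    using rs_idx[of a B S c] rs_idx[of a B S d] rs_idx[of b B S c] rs_idx[of b B S d]
      m[of "pick S a" "pick S b" c d] unfolding mm_def rs_dim(2) by simp
qed

lemma rs2: assumes "a < b" "b < dim_row A"
  shows "dim_row (row_sub A {a,b}) = 2" "c < dim_col A \<Longrightarrow> row_sub A {a,b} $$ (0,c) = A $$ (a,c)"
    "c < dim_col A \<Longrightarrow> row_sub A {a,b} $$ (1,c) = A $$ (b,c)"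
proof -
  have "{i. i < dim_row A \<and> i \<in> {a,b}} = {a,b}" using assms by auto
  then show d: "dim_row (row_sub A {a,b}) = 2" unfolding rs_dim using assms by simp
  show "c < dim_col A \<Longrightarrow> row_sub A {a,b} $$ (0,c) = A $$ (a,c)"
    using rs_idx(1)[of 0 A "{a,b}" c] d pick2[OF assms(1)] by simp
  show "c < dim_col A \<Longrightarrow> row_sub A {a,b} $$ (1,c) = A $$ (b,c)"
    using rs_idx(1)[of 1 A "{a,b}" c] d pick2[OF assms(1)] by simp
qed

lemma rs_all: "row_sub A {..<dim_row A} = A"
proof (rule eq_matI)
  have c: "{i. i < dim_row A \<and> i \<in> {..<dim_row A}} = {..<dim_row A}" by auto
  show dr: "dim_row (row_sub A {..<dim_row A}) = dim_row A" unfolding rs_dim c by simp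
  show "dim_col (row_sub A {..<dim_row A}) = dim_col A" by (simp add: rs_dim)
  fix r c assume "r < dim_row A" "c < dim_col A"
  moreover have "pick {..<dim_row A} r = r" if "r < dim_row A"
    using pick_reduce_set[of r "dim_row A" UNIV] that by (simp add: pick_UNIV lessThan_def)
  ultimately show "row_sub A {..<dim_row A} $$ (r, c) = A $$ (r, c)"
    using rs_idx(1)[of r A "{..<dim_row A}" c] dr by simp
qed


lemma lace2: assumes L: "te_lace A" and d2: "dim_row A = 2" and c: "c < dim_col A" and d: "d < dim_col A"
  shows "mm A 0 1 c d \<in> {-2,0,2}"
proof -
  have zp: "zero_pm1 A" and li: "rows_lin_indep A" and te: "tot_equimod A" and ntu: "\<not> tot_unimod A"
    using L unfolding te_lace_def te_set_def tu_set_def by blast+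
  have ent: "a < 2 \<Longrightarrow> x < dim_col A \<Longrightarrow> A $$ (a,x) \<in> {-1,0,1}" for a x
    using zp d2 unfolding zero_pm1_def by simp
  obtain R C where R: "R \<subseteq> {..<dim_row A}" and C: "C \<subseteq> {..<dim_col A}" and k: "card R = card C"
    and nd: "det (submatrix A R C) \<notin> {-1,0,1}"
    using ntu unfolding tot_unimod_def by blast
  have cr: "card {a. a < dim_row A \<and> a \<in> R} = card R" using card_sub_eq[OF R] .
  have cc: "card {a. a < dim_col A \<and> a \<in> C} = card R" using card_sub_eq[OF C] k by simp
  have pr: "x < card R \<Longrightarrow> pick R x < 2" for x using pick_lt[of x "dim_row A" R] cr d2 by simp
  have pc: "x < card R \<Longrightarrow> pick C x < dim_col A" for x using pick_lt[of x "dim_col A" C] cc by simp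
  have cR: "card R \<le> 2" using card_mono[OF _ R] d2 by simp
  have "card R \<noteq> 0" using det_sub(1)[OF R C k] nd by auto
  moreover have "card R \<noteq> 1" using det_sub(2)[OF R C k] nd ent[OF pr[of 0] pc[of 0]] by auto
  ultimately have c2: "card R = 2" using cR by linarith
  have RR: "R = {..<dim_row A}" using card_subset_eq[OF _ R] c2 d2 by simp
  have p0: "pick R 0 = 0" and p1: "pick R 1 = 1"
  proof -
    have "R = {0,1}" using RR d2 by auto
    then show "pick R 0 = 0" "pick R 1 = 1" using pick2[of 0 1] by simp_all
  qed
  define D where "D = det (submatrix A R C)"
  have Dv: "D = mm A 0 1 (pick C 0) (pick C 1)" using det_sub(3)[OF R C k c2] p0 p1 D_def by simp
  have "0 < card R" "1 < card R" using c2 by simp_all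
  note p0c = pc[OF this(1)] and p1c = pc[OF this(2)]
  have nd': "D \<notin> {-1,0,1}" using nd D_def by simp
  have e1: "A $$ (0, pick C 0) \<in> {-1,0,1}" by (rule ent[OF _ p0c]) simp
  have e2: "A $$ (0, pick C 1) \<in> {-1,0,1}" by (rule ent[OF _ p1c]) simp
  have e3: "A $$ (1, pick C 0) \<in> {-1,0,1}" by (rule ent[OF _ p0c]) simp
  have e4: "A $$ (1, pick C 1) \<in> {-1,0,1}" by (rule ent[OF _ p1c]) simp
  have nd'': "A $$ (0, pick C 0) * A $$ (1, pick C 1) - A $$ (0, pick C 1) * A $$ (1, pick C 0) \<notin> {-1,0,1}"
    using nd' unfolding Dv mm_def .
  have D2: "\<bar>D\<bar> = 2" unfolding Dv mm_def by (rule mm_range[OF e1 e4 e2 e3 nd''])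
  have sym: "mm A 0 1 x y = - mm A 0 1 y x" for x y unfolding mm_def by simp
  have main: "mm A 0 1 x y \<in> {-2,0,2}" if xy: "x < y" "y < dim_col A" for x y
  proof (cases "mm A 0 1 x y = 0")
    case True then show ?thesis by simp
  next
    case False
    have C2: "{x,y} \<subseteq> {..<dim_col A}" using xy by auto
    have k2: "card R = card {x,y}" using c2 xy by simp
    have E: "det (submatrix A R {x,y}) = mm A 0 1 x y"
      using det_sub(3)[OF R C2 k2 c2] p0 p1 pick2[OF xy(1)] by simp
    have RS: "R \<subseteq> {..<dim_row A}" and li': "rows_lin_indep (row_sub A R)"
      using R RR rs_all[of A] li by simp_all
    have teR: "\<And>C1 C2. C1 \<subseteq> {..<dim_col A} \<Longrightarrow> C2 \<subseteq> {..<dim_col A} \<Longrightarrow>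
           card C1 = card R \<Longrightarrow> card C2 = card R \<Longrightarrow>
           det (submatrix A R C1) \<noteq> 0 \<Longrightarrow> det (submatrix A R C2) \<noteq> 0 \<Longrightarrow>
           \<bar>det (submatrix A R C1)\<bar> = \<bar>det (submatrix A R C2)\<bar>"
      using te RS li' unfolding tot_equimod_def by blast
    have n1: "det (submatrix A R {x,y}) \<noteq> 0" using E False by simp
    have n2: "det (submatrix A R C) \<noteq> 0" using nd by auto
    have "\<bar>det (submatrix A R {x,y})\<bar> = \<bar>det (submatrix A R C)\<bar>"
      by (rule teR[OF C2 C k2[symmetric] k[symmetric] n1 n2])
    then have "\<bar>mm A 0 1 x y\<bar> = 2" using E D2 D_def by simp
    then show ?thesis by auto
  qed
  show ?thesis
  proof (cases c d rule: linorder_cases)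
    case less then show ?thesis using main d by simp
  next
    case equal then show ?thesis unfolding mm_def by simp
  next
    case greater then show ?thesis using main[of d c] c sym[of c d] by auto
  qed
qed

lemma pair_mm: assumes I: "te_interlace I" and a: "a < dim_row I" and b: "b < dim_row I" and ab: "a \<noteq> b"
  and c: "c < dim_col I" and d: "d < dim_col I"
  shows "mm I a b c d \<in> {-2,0,2}"
proof -
  have gen: "mm I x y c d \<in> {-2,0,2}" if "x < y" "y < dim_row I" for x y
  proof -
    have L: "te_lace (row_sub I {x,y})" using I that unfolding te_interlace_def by auto
    have "mm (row_sub I {x,y}) 0 1 c d \<in> {-2,0,2}"
      using lace2[OF L rs2(1)[OF that]] c d by (simp add: rs_dim)
    then show ?thesis using rs2[OF that] c d unfolding mm_def by simp
  qed
  show ?thesis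
  proof (cases "a < b")
    case True then show ?thesis using gen b by simp
  next
    case False
    then have "b < a" using ab by simp
    then have "mm I b a c d \<in> {-2,0,2}" using gen a by simp
    moreover have "mm I a b c d = - mm I b a c d" unfolding mm_def by simp
    ultimately show ?thesis by auto
  qed
qed

lemma card_compl: "x < n \<Longrightarrow> card {a. a < n \<and> a \<in> - {x}} = n - 1"
proof -
  assume "x < n"
  have "{a. a < n \<and> a \<in> - {x}} = {..<n} - {x}" by auto
  then show ?thesis using \<open>x < n\<close> by simp
qed

lemma card_compl2: "x < n \<Longrightarrow> card {a. a < n \<and> a \<noteq> x} = n - 1"
  using card_compl[of x n] by simp

lemma trim_facts: assumes i: "i < dim_row I" and j: "j < dim_col I"
  shows "dim_row (trim I i j) = dim_row I - 1" "dim_col (trim I i j) = dim_col I - 1"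
    "r < dim_row I - 1 \<Longrightarrow> c < dim_col I - 1 \<Longrightarrow>
       trim I i j $$ (r,c) = pivot_op I i j $$ (pick (-{i}) r, pick (-{j}) c)"
    "r < dim_row I - 1 \<Longrightarrow> pick (-{i}) r < dim_row I \<and> pick (-{i}) r \<noteq> i"
    "c < dim_col I - 1 \<Longrightarrow> pick (-{j}) c < dim_col I \<and> pick (-{j}) c \<noteq> j"
proof -
  have pd: "dim_row (pivot_op I i j) = dim_row I" "dim_col (pivot_op I i j) = dim_col I"
    unfolding pivot_op_def by simp_all
  have inf: "infinite (- {x::nat})" for x by (simp add: infinite_UNIV_nat)
  show "dim_row (trim I i j) = dim_row I - 1" "dim_col (trim I i j) = dim_col I - 1"
    unfolding trim_def dim_submatrix pd using card_compl i j by simp_all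
  show "r < dim_row I - 1 \<Longrightarrow> c < dim_col I - 1 \<Longrightarrow>
       trim I i j $$ (r,c) = pivot_op I i j $$ (pick (-{i}) r, pick (-{j}) c)"
    unfolding trim_def by (rule submatrix_index) (simp_all add: pd card_compl2 i j)
  show "r < dim_row I - 1 \<Longrightarrow> pick (-{i}) r < dim_row I \<and> pick (-{i}) r \<noteq> i"
    using pick_le[of r "dim_row I" "-{i}"] card_compl[OF i] pick_in_set_inf[OF inf[of i], of r] by simp
  show "c < dim_col I - 1 \<Longrightarrow> pick (-{j}) c < dim_col I \<and> pick (-{j}) c \<noteq> j"
    using pick_le[of c "dim_col I" "-{j}"] card_compl[OF j] pick_in_set_inf[OF inf[of j], of c] by simp
qed


lemma hval: fixes s x y z q :: real
  assumes "s \<in> {-1,1}" "x \<in> {-1,0,1}" "y \<in> {-1,0,1}" "z \<in> {-1,0,1}" "q = x - y / s * z" "q \<in> {-2,0,2}"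
  shows "q/2 \<in> {-1,0,1}" "q/2 \<noteq> 0 \<Longrightarrow> q/2 = - s * y * z"
proof -
  have w: "y / s * z = s * y * z" using assms(1) by auto
  have wr: "s * y * z \<in> {-1,0,1}" using assms(1,3,4) by (auto simp: pm1_mult)
  define w where "w = s * y * z"
  have qw: "q = x - w" using assms(5) w w_def by simp
  have "q/2 \<in> {-1,0,1} \<and> (q/2 \<noteq> 0 \<longrightarrow> q/2 = - w)"
    using assms(2) assms(6) wr unfolding qw w_def[symmetric] by (elim insertE emptyE; simp)
  then show "q/2 \<in> {-1,0,1}" "q/2 \<noteq> 0 \<Longrightarrow> q/2 = - s * y * z" unfolding w_def by auto
qed

lemma minor_key: fixes s h1 h2 h3 h4 ya yb zc zd :: real
  assumes "h1 \<in> {-1,0,1}" "h2 \<in> {-1,0,1}" "h3 \<in> {-1,0,1}" "h4 \<in> {-1,0,1}" "s \<in> {-1,1}"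
    "h1 \<noteq> 0 \<Longrightarrow> h1 = - s * ya * zc" "h4 \<noteq> 0 \<Longrightarrow> h4 = - s * yb * zd"
    "h2 \<noteq> 0 \<Longrightarrow> h2 = - s * ya * zd" "h3 \<noteq> 0 \<Longrightarrow> h3 = - s * yb * zc"
  shows "h1 * h4 - h2 * h3 \<in> {-1,0,1}"
proof (cases "h1 = 0 \<or> h4 = 0")
  case True then show ?thesis using pm1_mult[OF assms(2,3)] by auto
next
  case F1: False
  show ?thesis
  proof (cases "h2 = 0 \<or> h3 = 0")
    case True then show ?thesis using pm1_mult[OF assms(1,4)] by auto
  next
    case False
    have ss: "s * s = 1" using assms(5) by auto
    have "h1 * h4 = (s*s) * (ya * zc * yb * zd)" using F1 assms(6,7) by (simp add: algebra_simps)
    moreover have "h2 * h3 = (s*s) * (ya * zc * yb * zd)" using False assms(8,9) by (simp add: algebra_simps)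
    ultimately show ?thesis by simp
  qed
qed

theorem mainTheorem7:
  fixes I :: "real mat" and i j :: nat
  assumes "te_interlace I"
    and "i < dim_row I" and "j < dim_col I" and "I $$ (i,j) \<noteq> 0"
  shows "(\<forall>r<dim_row (trim I i j). \<forall>c<dim_col (trim I i j).
            trim I i j $$ (r,c) \<noteq> 0 \<longrightarrow> \<bar>trim I i j $$ (r,c)\<bar> = 2)
       \<and> (\<forall>r1 r2. r1 < dim_row (trim I i j) \<longrightarrow> r2 < dim_row (trim I i j) \<longrightarrow> r1 \<noteq> r2 \<longrightarrow>
            \<not> te_lace (row_sub ((1/2) \<cdot>\<^sub>m trim I i j) {r1, r2}))
       \<and> (\<forall>S. S \<subseteq> {..<dim_row (trim I i j)} \<longrightarrow>
            \<not> te_interlace (row_sub ((1/2) \<cdot>\<^sub>m trim I i j) S))"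
proof -
  note I = assms(1) and i = assms(2) and j = assms(3)
  define s where "s = I $$ (i,j)"
  define T where "T = trim I i j"
  define H where "H = (1/2) \<cdot>\<^sub>m T"
  have zp: "zero_pm1 I" using I unfolding te_interlace_def te_set_def by blast
  have ent: "a < dim_row I \<Longrightarrow> c < dim_col I \<Longrightarrow> I $$ (a,c) \<in> {-1,0,1}" for a c
    using zp unfolding zero_pm1_def by blast
  have s1: "s \<in> {-1,1}" using ent[OF i j] assms(4) unfolding s_def by auto
  have Tdr: "dim_row T = dim_row I - 1" and Tdc: "dim_col T = dim_col I - 1"
    using trim_facts[OF i j] unfolding T_def by simp_all
  define Q where "Q a c = I $$ (a,c) - I $$ (a,j) / s * I $$ (i,c)" for a c
  have Qmm: "Q a c \<in> {-2,0,2}" if "a < dim_row I" "a \<noteq> i" "c < dim_col I" for a c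
  proof -
    have m: "mm I i a j c \<in> {-2,0,2}" using pair_mm[OF I i that(1) _ j that(3)] that(2) by auto
    have "Q a c = s * mm I i a j c" unfolding Q_def mm_def s_def[symmetric] using s1 by auto
    then show ?thesis using m s1 by auto
  qed
  have Tidx: "T $$ (r,c) = Q (pick (-{i}) r) (pick (-{j}) c)"
    "pick (-{i}) r < dim_row I" "pick (-{i}) r \<noteq> i" "pick (-{j}) c < dim_col I" "pick (-{j}) c \<noteq> j"
    if "r < dim_row T" "c < dim_col T" for r c
  proof -
    have rr: "r < dim_row I - 1" "c < dim_col I - 1" using that Tdr Tdc by simp_all
    note f3 = trim_facts(3)[OF i j rr] and f4 = trim_facts(4)[OF i j rr(1)] and f5 = trim_facts(5)[OF i j rr(2)]
    show "pick (-{i}) r < dim_row I" "pick (-{i}) r \<noteq> i" "pick (-{j}) c < dim_col I" "pick (-{j}) c \<noteq> j"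
      using f4 f5 by simp_all
    show "T $$ (r,c) = Q (pick (-{i}) r) (pick (-{j}) c)"
      unfolding T_def f3 Q_def s_def pivot_op_def using f4 f5 i by simp
  qed
  have Tent: "T $$ (r,c) \<in> {-2,0,2}" if "r < dim_row T" "c < dim_col T" for r c
    using Tidx[OF that] Qmm by simp
  have part1: "\<forall>r<dim_row T. \<forall>c<dim_col T. T $$ (r,c) \<noteq> 0 \<longrightarrow> \<bar>T $$ (r,c)\<bar> = 2"
    using Tent by fastforce
  have Hd: "dim_row H = dim_row T" "dim_col H = dim_col T" unfolding H_def by simp_all
  have Hidx: "H $$ (r,c) = T $$ (r,c) / 2" if "r < dim_row T" "c < dim_col T" for r c
    using that unfolding H_def by simp
  have Hval: "H $$ (r,c) \<in> {-1,0,1}"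
     "H $$ (r,c) \<noteq> 0 \<Longrightarrow> H $$ (r,c) = - s * I $$ (pick (-{i}) r, j) * I $$ (i, pick (-{j}) c)"
    if "r < dim_row T" "c < dim_col T" for r c
  proof -
    note t = Tidx[OF that]
    have q: "Q (pick (-{i}) r) (pick (-{j}) c) \<in> {-2,0,2}" using Qmm t by simp
    note hv = hval[OF s1 ent[OF t(2) t(4)] ent[OF t(2) j] ent[OF i t(4)] Q_def q]
    have hq: "H $$ (r,c) = Q (pick (-{i}) r) (pick (-{j}) c) / 2" using Hidx[OF that] t(1) by simp
    show "H $$ (r,c) \<in> {-1,0,1}" unfolding hq by (rule hv(1))
    show "H $$ (r,c) \<noteq> 0 \<Longrightarrow> H $$ (r,c) = - s * I $$ (pick (-{i}) r, j) * I $$ (i, pick (-{j}) c)"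
      unfolding hq by (rule hv(2))
  qed
  have gH: "goodH H" unfolding goodH_def
  proof (intro conjI allI impI)
    show "zero_pm1 H" unfolding zero_pm1_def Hd using Hval(1) by blast
    fix a b c d assume "a < dim_row H" "b < dim_row H" "c < dim_col H" "d < dim_col H"
    then have ab: "a < dim_row T" "b < dim_row T" "c < dim_col T" "d < dim_col T" using Hd by simp_all
    show "mm H a b c d \<in> {-1,0,1}" unfolding mm_def
      by (rule minor_key[OF Hval(1)[OF ab(1,3)] Hval(1)[OF ab(1,4)] Hval(1)[OF ab(2,3)]
           Hval(1)[OF ab(2,4)] s1 Hval(2)[OF ab(1,3)] Hval(2)[OF ab(2,4)] Hval(2)[OF ab(1,4)]
           Hval(2)[OF ab(2,3)]])
  qed
  have part2: "\<forall>r1 r2. r1 < dim_row T \<longrightarrow> r2 < dim_row T \<longrightarrow> r1 \<noteq> r2 \<longrightarrow>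
            \<not> te_lace (row_sub H {r1, r2})"
  proof (intro allI impI)
    fix r1 r2 :: nat
    have "dim_row (row_sub H {r1,r2}) \<le> card {r1,r2}" by (rule rs_dim_le) simp
    also have "\<dots> \<le> 2" by (simp add: card_insert_le_m1)
    finally show "\<not> te_lace (row_sub H {r1, r2})"
      using goodH_not_te[OF goodH_rs[OF gH]] unfolding te_lace_def by blast
  qed
  have part3: "\<forall>S. S \<subseteq> {..<dim_row T} \<longrightarrow> \<not> te_interlace (row_sub H S)"
  proof (intro allI impI notI)
    fix S assume "S \<subseteq> {..<dim_row T}" and ti: "te_interlace (row_sub H S)"
    define B where "B = row_sub H S"
    have gB: "goodH B" unfolding B_def by (rule goodH_rs[OF gH])
    show False
    proof (cases "dim_row B \<le> 2")
      case True then show False using goodH_not_te[OF gB] ti unfolding B_def te_interlace_def by blast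
    next
      case False
      then have "te_lace (row_sub B {0,1})" using ti unfolding B_def te_interlace_def by auto
      moreover have "dim_row (row_sub B {0,1}) \<le> 2"
        using rs_dim_le[of "{0::nat,1}" B] by simp
      ultimately show False using goodH_not_te[OF goodH_rs[OF gB]] unfolding te_lace_def by blast
    qed
  qed
  show ?thesis using part1 part2 part3 unfolding T_def H_def by blast
qed

end
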